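(* Let $(\mathcal E,B,\mathcal L_{\mathcal P})$ be an epistemic space with $|\mathcal P|\ge2$. Any ES basic fusion operator that satisfies (ESF-SD), (ESF-U) and (ESF-I) also satisfies (ESF-D).
   Context: $[\![\phi]\!]$ denotes models; $\varphi_M$ a formula with models exactly $M$. Epistemic space: $\mathcal E$ nonempty, $B:\mathcal E\to\mathcal L_{\mathcal P}$ (propositional formulas over finite $\mathcal P$) with image modulo equivalence exactly the consistent formulas. Agents: well-ordered set $\mathcal S$; society: nonempty finite $N\subseteq\mathcal S$; $N$-profile $\Phi:N\to\mathcal E$, $E_i=\Phi(i)$, identified with $E_i$ if $N=\{i\}$; profiles on $\{i_1<\dots<i_n\}$, $\{j_1<\dots<j_m\}$ equivalent if $n=m$ and entries coincide position-wise. ES basic fusion operator: a map $\nabla(\Phi,E)\in\mathcal E$ with (ESF1) $B(\nabla(\Phi,E))\vdash B(E)$; (ESF2) equivalent profiles and $B(E)\equiv B(E')$ give equivalent $B(\nabla)$; (ESF3) if $B(E)\equiv B(E')\wedge B(E'')$ then $B(\nabla(\Phi,E'))\wedge B(E'')\vdash B(\nabla(\Phi,E))$; (ESF4) if moreover $B(\nabla(\Phi,E'))\wedge B(E'')\nvdash\bot$ then $B(\nabla(\Phi,E))\vdash B(\nabla(\Phi,E'))\wedge B(E'')$. (ESF-SD): for every agent $i$, interpretations $w,w',w''$ and $E_{w,w'},E_{w',w''}$ with $[\![B(E_{w,w'})]\!]=\{w,w'\}$, $[\![B(E_{w',w''})]\!]=\{w',w''\}$, there exist $i$-profiles realising each of: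 (i) $B(\nabla(E_i,E_{w,w'}))\equiv\varphi_{w,w'}$ and $B(\nabla(E_i,E_{w',w''}))\equiv\varphi_{w',w''}$; (ii) $\equiv\varphi_{w,w'}$ and $\equiv\varphi_{w'}$; (iii) $\equiv\varphi_w$ and $\equiv\varphi_{w',w''}$; (iv) $\equiv\varphi_w$ and $\equiv\varphi_{w'}$. (ESF-U): for every $N$, $N$-profile $\Phi$, $E$: if $E_i=E_j$ for all $i,j\in N$ then $B(\nabla(\Phi,E))\equiv B(\nabla(E_i,E))$ for all $i\in N$. (ESF-I): for every $N$, $N$-profiles $\Phi,\Phi'$, $E$: if for every $E'$ with $B(E')\vdash B(E)$, $B(\nabla(E_j,E'))\equiv B(\nabla(E'_j,E'))$ for all $j\in N$, then $B(\nabla(\Phi,E))\equiv B(\nabla(\Phi',E))$. (ESF-D): for every society $N$ there exists $d_N\in N$ such that for every $N$-profile $\Phi$ and every $E$, $B(\nabla(\Phi,E))\vdash B(\nabla(E_{d_N},E))$. *)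

theory Defs
  imports Main
begin

datatype 'p form = Atom 'p | FBot | FNeg "'p form" | FAnd "'p form" "'p form"
  | FOr "'p form" "'p form" | FImp "'p form" "'p form"

fun sat :: "'p set \<Rightarrow> 'p form \<Rightarrow> bool" where
  "sat w (Atom p) = (p \<in> w)"
| "sat w FBot = False"
| "sat w (FNeg f) = (\<not> sat w f)"
| "sat w (FAnd f g) = (sat w f \<and> sat w g)"
| "sat w (FOr f g) = (sat w f \<or> sat w g)"
| "sat w (FImp f g) = (sat w f \<longrightarrow> sat w g)"

definition models :: "'p form \<Rightarrow> 'p set set" where
  "models f = {w. sat w f}"

definition entails :: "'p form \<Rightarrow> 'p form \<Rightarrow> bool" (infix "\<turnstile>" 55) where
  "f \<turnstile> g \<longleftrightarrow> models f \<subseteq> models g"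

definition equiv_form :: "'p form \<Rightarrow> 'p form \<Rightarrow> bool" (infix "\<equiv>\<^sub>F" 55) where
  "f \<equiv>\<^sub>F g \<longleftrightarrow> models f = models g"

definition consistent :: "'p form \<Rightarrow> bool" where
  "consistent f \<longleftrightarrow> \<not> (f \<turnstile> FBot)"

text \<open>The set of epistemic states is the (nonempty) type 'e.  B maps every state to a
  formula; its image modulo equivalence is exactly the set of consistent formulas.\<close>
definition epistemic_space :: "('e \<Rightarrow> 'p form) \<Rightarrow> bool" where
  "epistemic_space B \<longleftrightarrow>
     (\<forall>e. consistent (B e)) \<and> (\<forall>f. consistent f \<longrightarrow> (\<exists>e. B e \<equiv>\<^sub>F f))"

definition society :: "'a set \<Rightarrow> bool" where
  "society N \<longleftrightarrow> N \<noteq> {} \<and> finite N"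

definition profile :: "('a \<rightharpoonup> 'e) \<Rightarrow> bool" where
  "profile \<Phi> \<longleftrightarrow> society (dom \<Phi>)"

definition equiv_profile :: "('a::linorder \<rightharpoonup> 'e) \<Rightarrow> ('a \<rightharpoonup> 'e) \<Rightarrow> bool" where
  "equiv_profile \<Phi> \<Psi> \<longleftrightarrow>
     map (\<lambda>i. the (\<Phi> i)) (sorted_list_of_set (dom \<Phi>))
       = map (\<lambda>i. the (\<Psi> i)) (sorted_list_of_set (dom \<Psi>))"

text \<open>A single state E_i is identified with the {i}-profile [i \<mapsto> E_i].\<close>

definition ES_basic_fusion ::
  "('e \<Rightarrow> 'p form) \<Rightarrow> (('a::linorder \<rightharpoonup> 'e) \<Rightarrow> 'e \<Rightarrow> 'e) \<Rightarrow> bool" where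
  "ES_basic_fusion B nab \<longleftrightarrow>
     (\<forall>\<Phi> E. profile \<Phi> \<longrightarrow> B (nab \<Phi> E) \<turnstile> B E) \<and>
     (\<forall>\<Phi> \<Phi>' E E'. profile \<Phi> \<longrightarrow> profile \<Phi>' \<longrightarrow> equiv_profile \<Phi> \<Phi>' \<longrightarrow> B E \<equiv>\<^sub>F B E'
        \<longrightarrow> B (nab \<Phi> E) \<equiv>\<^sub>F B (nab \<Phi>' E')) \<and>
     (\<forall>\<Phi> E E' E''. profile \<Phi> \<longrightarrow> B E \<equiv>\<^sub>F FAnd (B E') (B E'')
        \<longrightarrow> FAnd (B (nab \<Phi> E')) (B E'') \<turnstile> B (nab \<Phi> E)) \<and>
     (\<forall>\<Phi> E E' E''. profile \<Phi> \<longrightarrow> B E \<equiv>\<^sub>F FAnd (B E') (B E'')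
        \<longrightarrow> consistent (FAnd (B (nab \<Phi> E')) (B E''))
        \<longrightarrow> B (nab \<Phi> E) \<turnstile> FAnd (B (nab \<Phi> E')) (B E''))"

text \<open>(ESF-SD).  "B(X) \<equiv> \<phi>_M" is written as "models (B X) = M".  The three
  interpretations are taken pairwise distinct.\<close>
definition ESF_SD ::
  "('e \<Rightarrow> 'p form) \<Rightarrow> (('a \<rightharpoonup> 'e) \<Rightarrow> 'e \<Rightarrow> 'e) \<Rightarrow> bool" where
  "ESF_SD B nab \<longleftrightarrow>
     (\<forall>(i::'a) (w::'p set) w' w'' E1 E2.
        w \<noteq> w' \<longrightarrow> w' \<noteq> w'' \<longrightarrow> w \<noteq> w'' \<longrightarrow>
        models (B E1) = {w, w'} \<longrightarrow> models (B E2) = {w', w''} \<longrightarrow>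
        (\<exists>Ei. models (B (nab [i \<mapsto> Ei] E1)) = {w, w'} \<and> models (B (nab [i \<mapsto> Ei] E2)) = {w', w''}) \<and>
        (\<exists>Ei. models (B (nab [i \<mapsto> Ei] E1)) = {w, w'} \<and> models (B (nab [i \<mapsto> Ei] E2)) = {w'}) \<and>
        (\<exists>Ei. models (B (nab [i \<mapsto> Ei] E1)) = {w} \<and> models (B (nab [i \<mapsto> Ei] E2)) = {w', w''}) \<and>
        (\<exists>Ei. models (B (nab [i \<mapsto> Ei] E1)) = {w} \<and> models (B (nab [i \<mapsto> Ei] E2)) = {w'}))"

definition ESF_U ::
  "('e \<Rightarrow> 'p form) \<Rightarrow> (('a \<rightharpoonup> 'e) \<Rightarrow> 'e \<Rightarrow> 'e) \<Rightarrow> bool" where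
  "ESF_U B nab \<longleftrightarrow>
     (\<forall>\<Phi> E. profile \<Phi> \<longrightarrow> (\<forall>i\<in>dom \<Phi>. \<forall>j\<in>dom \<Phi>. \<Phi> i = \<Phi> j) \<longrightarrow>
        (\<forall>i\<in>dom \<Phi>. B (nab \<Phi> E) \<equiv>\<^sub>F B (nab [i \<mapsto> the (\<Phi> i)] E)))"

definition ESF_I ::
  "('e \<Rightarrow> 'p form) \<Rightarrow> (('a \<rightharpoonup> 'e) \<Rightarrow> 'e \<Rightarrow> 'e) \<Rightarrow> bool" where
  "ESF_I B nab \<longleftrightarrow>
     (\<forall>\<Phi> \<Phi>' E. profile \<Phi> \<longrightarrow> dom \<Phi>' = dom \<Phi> \<longrightarrow>
        (\<forall>E'. B E' \<turnstile> B E \<longrightarrow>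
           (\<forall>j\<in>dom \<Phi>. B (nab [j \<mapsto> the (\<Phi> j)] E') \<equiv>\<^sub>F B (nab [j \<mapsto> the (\<Phi>' j)] E'))) \<longrightarrow>
        B (nab \<Phi> E) \<equiv>\<^sub>F B (nab \<Phi>' E))"

definition ESF_D ::
  "('e \<Rightarrow> 'p form) \<Rightarrow> (('a \<rightharpoonup> 'e) \<Rightarrow> 'e \<Rightarrow> 'e) \<Rightarrow> bool" where
  "ESF_D B nab \<longleftrightarrow>
     (\<forall>N. society N \<longrightarrow> (\<exists>d\<in>N. \<forall>\<Phi> E. dom \<Phi> = N \<longrightarrow>
        B (nab \<Phi> E) \<turnstile> B (nab [d \<mapsto> the (\<Phi> d)] E)))"

end

theory Submission
  imports Defs
begin



lemma sat_foldr_and: "sat v (foldr (\<lambda>p f. FAnd (g p) f) qs (FNeg FBot)) \<longleftrightarrow> (\<forall>p\<in>set qs. sat v (g p))"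
  by (induction qs) auto

lemma sat_foldr_or: "sat v (foldr (\<lambda>p f. FOr (g p) f) qs FBot) \<longleftrightarrow> (\<exists>p\<in>set qs. sat v (g p))"
  by (induction qs) auto

lemma exists_form: fixes S :: "'p::finite set set" shows "\<exists>f. models f = S"
proof -
  obtain ps :: "'p list" where ps: "set ps = UNIV" using finite_list[OF finite_UNIV] by blast
  define lit where "lit w p = (if p \<in> w then Atom p else FNeg (Atom p))" for w :: "'p set" and p
  define chr where "chr w = foldr (\<lambda>p f. FAnd (lit w p) f) ps (FNeg FBot)" for w
  have l: "sat v (lit w p) \<longleftrightarrow> (p \<in> v \<longleftrightarrow> p \<in> w)" for v w p
    unfolding lit_def by simp
  have chr: "sat v (chr w) \<longleftrightarrow> v = w" for v w
  proof -
    have "sat v (chr w) \<longleftrightarrow> (\<forall>p. p \<in> v \<longleftrightarrow> p \<in> w)"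
      unfolding chr_def sat_foldr_and ps l by simp
    also have "\<dots> \<longleftrightarrow> v = w" by (rule set_eq_iff[symmetric])
    finally show ?thesis .
  qed
  have fS: "finite S" by (rule finite_subset[OF subset_UNIV finite_UNIV])
  obtain ws where ws: "set ws = S" using finite_list[OF fS] by blast
  define g where "g = foldr (\<lambda>w f. FOr (chr w) f) ws FBot"
  have "sat v g \<longleftrightarrow> v \<in> S" for v unfolding g_def sat_foldr_or chr ws by simp
  then have "models g = S" unfolding models_def by simp
  then show ?thesis by blast
qed

lemma consistent_iff: "consistent f \<longleftrightarrow> models f \<noteq> {}"
  unfolding consistent_def entails_def models_def by auto




locale arrow =
  fixes B :: "'e \<Rightarrow> 'p::finite form" and nab :: "('a::wellorder \<rightharpoonup> 'e) \<Rightarrow> 'e \<Rightarrow> 'e"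
  assumes es: "epistemic_space B" and card2: "card (UNIV::'p set) \<ge> 2"
    and bf: "ES_basic_fusion B nab" and sd: "ESF_SD B nab" and U: "ESF_U B nab" and I: "ESF_I B nab"
begin

lemma B_ne: "models (B e) \<noteq> {}"
  using es unfolding epistemic_space_def consistent_iff by auto

lemma st_ex: assumes "S \<noteq> {}" shows "\<exists>e. models (B e) = S"
proof -
  obtain f where f: "models f = S" using exists_form by blast
  then have "consistent f" using assms consistent_iff by auto
  then obtain e where "B e \<equiv>\<^sub>F f" using es unfolding epistemic_space_def by blast
  then have "models (B e) = S" using f unfolding equiv_form_def by simp
  then show ?thesis by blast
qed

definition st :: "'p set set \<Rightarrow> 'e" where "st S = (SOME e. models (B e) = S)"

lemma st: "S \<noteq> {} \<Longrightarrow> models (B (st S)) = S"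
  unfolding st_def by (rule someI_ex, erule st_ex)

definition C :: "('a \<rightharpoonup> 'e) \<Rightarrow> 'p set set \<Rightarrow> 'p set set" where
  "C \<Phi> S = models (B (nab \<Phi> (st S)))"

lemma models_and: "models (FAnd f g) = models f \<inter> models g"
  unfolding models_def by auto

lemma esf1: "profile \<Phi> \<Longrightarrow> models (B (nab \<Phi> E)) \<subseteq> models (B E)"
  using bf unfolding ES_basic_fusion_def entails_def by blast

lemma esf2: "profile \<Phi> \<Longrightarrow> models (B E) = models (B E') \<Longrightarrow> models (B (nab \<Phi> E)) = models (B (nab \<Phi> E'))"
  using bf unfolding ES_basic_fusion_def equiv_form_def equiv_profile_def by blast

lemma esf3: "profile \<Phi> \<Longrightarrow> models (B E) = models (B E') \<inter> models (B E'')
   \<Longrightarrow> models (B (nab \<Phi> E')) \<inter> models (B E'') \<subseteq> models (B (nab \<Phi> E))"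
  using bf unfolding ES_basic_fusion_def equiv_form_def entails_def models_and
  by blast

lemma esf4: "profile \<Phi> \<Longrightarrow> models (B E) = models (B E') \<inter> models (B E'')
   \<Longrightarrow> models (B (nab \<Phi> E')) \<inter> models (B E'') \<noteq> {}
   \<Longrightarrow> models (B (nab \<Phi> E)) \<subseteq> models (B (nab \<Phi> E')) \<inter> models (B E'')"
  using bf unfolding ES_basic_fusion_def equiv_form_def entails_def consistent_iff models_and
  by blast

lemma C_E: "profile \<Phi> \<Longrightarrow> models (B E) = S \<Longrightarrow> models (B (nab \<Phi> E)) = C \<Phi> S"
proof -
  assume p: "profile \<Phi>" and e: "models (B E) = S"
  have "S \<noteq> {}" using e B_ne by auto
  then have "models (B E) = models (B (st S))" using st e by auto
  then show ?thesis unfolding C_def by (rule esf2[OF p])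
qed

lemma C_sub: "profile \<Phi> \<Longrightarrow> S \<noteq> {} \<Longrightarrow> C \<Phi> S \<subseteq> S"
  unfolding C_def using esf1[of \<Phi> "st S"] st[of S] by simp

lemma C_ne: "C \<Phi> S \<noteq> {}"
  unfolding C_def using B_ne by blast

lemma C_choice: assumes "profile \<Phi>" "S \<noteq> {}" "S \<subseteq> T" "C \<Phi> T \<inter> S \<noteq> {}"
  shows "C \<Phi> S = C \<Phi> T \<inter> S"
proof -
  have T: "T \<noteq> {}" using assms by auto
  have e: "models (B (st S)) = models (B (st T)) \<inter> models (B (st S))"
    using st[OF T] st[OF assms(2)] assms(3) by auto
  have st2: "models (B (st S)) = S" "models (B (st T)) = T" using st[OF T] st[OF assms(2)] by auto
  have 1: "C \<Phi> T \<inter> S \<subseteq> C \<Phi> S"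
    using esf3[OF assms(1) e] unfolding C_def st2 .
  have 2: "C \<Phi> S \<subseteq> C \<Phi> T \<inter> S"
    using esf4[OF assms(1) e] assms(4) unfolding C_def st2 by blast
  from 1 2 show ?thesis by (rule equalityI[rotated])
qed

definition pref :: "('a \<rightharpoonup> 'e) \<Rightarrow> 'p set \<Rightarrow> 'p set \<Rightarrow> bool" where
  "pref \<Phi> x y \<longleftrightarrow> x \<in> C \<Phi> {x, y}"

definition sp where "sp \<Phi> x y \<longleftrightarrow> pref \<Phi> x y \<and> \<not> pref \<Phi> y x"

lemma C_pair: "profile \<Phi> \<Longrightarrow> C \<Phi> {x, y} = {v. (v = x \<and> pref \<Phi> x y) \<or> (v = y \<and> pref \<Phi> y x)}"
  unfolding pref_def using C_sub[of \<Phi> "{x,y}"] by (auto simp: insert_commute[of y x])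

lemma C_single: "profile \<Phi> \<Longrightarrow> C \<Phi> {x} = {x}"
  using C_sub[of \<Phi> "{x}"] C_ne[of \<Phi> "{x}"] by auto

lemma pref_refl: "profile \<Phi> \<Longrightarrow> pref \<Phi> x x"
  unfolding pref_def using C_single by auto

lemma pref_total: "profile \<Phi> \<Longrightarrow> pref \<Phi> x y \<or> pref \<Phi> y x"
  using C_pair[of \<Phi> x y] C_ne[of \<Phi> "{x,y}"] by auto

lemma pref_trans: assumes p: "profile \<Phi>" and xy: "pref \<Phi> x y" and yz: "pref \<Phi> y z"
  shows "pref \<Phi> x z"
proof -
  let ?T = "{x,y,z}"
  have sub: "C \<Phi> ?T \<subseteq> ?T" using C_sub[OF p] by auto
  have c1: "x \<in> C \<Phi> ?T \<Longrightarrow> pref \<Phi> x z"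
    using C_choice[OF p, of "{x,z}" ?T] unfolding pref_def by auto
  have c2: "y \<in> C \<Phi> ?T \<Longrightarrow> x \<in> C \<Phi> ?T"
    using C_choice[OF p, of "{x,y}" ?T] xy unfolding pref_def by auto
  have c3: "z \<in> C \<Phi> ?T \<Longrightarrow> y \<in> C \<Phi> ?T"
    using C_choice[OF p, of "{y,z}" ?T] yz unfolding pref_def by auto
  obtain v where "v \<in> C \<Phi> ?T" using C_ne by blast
  then show ?thesis using sub c1 c2 c3 by auto
qed

lemma sp_pref_trans: "profile \<Phi> \<Longrightarrow> sp \<Phi> x y \<Longrightarrow> pref \<Phi> y z \<Longrightarrow> sp \<Phi> x z"
  unfolding sp_def using pref_trans by blast

lemma pref_sp_trans: "profile \<Phi> \<Longrightarrow> pref \<Phi> x y \<Longrightarrow> sp \<Phi> y z \<Longrightarrow> sp \<Phi> x z"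
  unfolding sp_def using pref_trans by blast

lemma sp_trans: "profile \<Phi> \<Longrightarrow> sp \<Phi> x y \<Longrightarrow> sp \<Phi> y z \<Longrightarrow> sp \<Phi> x z"
  unfolding sp_def using pref_trans by blast

end



context arrow
begin

abbreviation ip :: "('a \<rightharpoonup> 'e) \<Rightarrow> 'a \<Rightarrow> ('a \<rightharpoonup> 'e)" where
  "ip \<Phi> j \<equiv> [j \<mapsto> the (\<Phi> j)]"

lemma profile_single: "profile [j \<mapsto> e]"
  unfolding profile_def society_def by simp

lemma pref_C1: "pref P a b \<longleftrightarrow> a \<in> C P {a, b}"
  unfolding pref_def ..

lemma pref_C2: "pref P b a \<longleftrightarrow> b \<in> C P {a, b}"
  unfolding pref_def by (simp add: insert_commute)

definition samepat where
  "samepat P Q a b \<longleftrightarrow> (pref P a b \<longleftrightarrow> pref Q a b) \<and> (pref P b a \<longleftrightarrow> pref Q b a)"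

lemma samepat_sym: "samepat P Q a b \<longleftrightarrow> samepat P Q b a"
  unfolding samepat_def by blast

lemma samepat_sp: "sp P a b \<Longrightarrow> sp Q a b \<Longrightarrow> samepat P Q a b"
  unfolding samepat_def sp_def by blast

lemma samepat_C: assumes "profile P" "profile Q" "samepat P Q a b"
  shows "C P {a,b} = C Q {a,b}"
  using assms unfolding samepat_def by (simp add: C_pair)

lemma IIA: assumes p: "profile \<Phi>" and d: "dom \<Phi>' = dom \<Phi>"
  and h: "\<forall>j\<in>dom \<Phi>. samepat (ip \<Phi> j) (ip \<Phi>' j) x y"
  shows "samepat \<Phi> \<Phi>' x y"
proof -
  have p': "profile \<Phi>'" using p d unfolding profile_def by simp
  have "\<forall>E'. B E' \<turnstile> B (st {x,y}) \<longrightarrow>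
           (\<forall>j\<in>dom \<Phi>. B (nab [j \<mapsto> the (\<Phi> j)] E') \<equiv>\<^sub>F B (nab [j \<mapsto> the (\<Phi>' j)] E'))"
  proof (intro allI impI ballI)
    fix E' j assume e: "B E' \<turnstile> B (st {x,y})" and j: "j \<in> dom \<Phi>"
    define S where "S = models (B E')"
    have S: "S \<subseteq> {x,y}" "S \<noteq> {}" using e st[of "{x,y}"] B_ne unfolding S_def entails_def by auto
    have m1: "models (B (nab (ip \<Phi> j) E')) = C (ip \<Phi> j) S"
      using C_E[OF profile_single] S_def by simp
    have m2: "models (B (nab (ip \<Phi>' j) E')) = C (ip \<Phi>' j) S"
      using C_E[OF profile_single] S_def by simp
    have cases: "S = {x} \<or> S = {y} \<or> S = {x,y}" using S by auto
    have spj: "samepat (ip \<Phi> j) (ip \<Phi>' j) x y" using h j by blast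
    have "C (ip \<Phi> j) S = C (ip \<Phi>' j) S"
      using cases
    proof (elim disjE)
      assume "S = {x}" then show ?thesis by (simp add: C_single[OF profile_single])
    next
      assume "S = {y}" then show ?thesis by (simp add: C_single[OF profile_single])
    next
      assume "S = {x,y}" then show ?thesis using samepat_C[OF profile_single profile_single spj] by simp
    qed
    then show "B (nab [j \<mapsto> the (\<Phi> j)] E') \<equiv>\<^sub>F B (nab [j \<mapsto> the (\<Phi>' j)] E')"
      unfolding equiv_form_def using m1 m2 by simp
  qed
  then have "B (nab \<Phi> (st {x,y})) \<equiv>\<^sub>F B (nab \<Phi>' (st {x,y}))"
    using I p d unfolding ESF_I_def by blast
  then have "C \<Phi> {x,y} = C \<Phi>' {x,y}" unfolding equiv_form_def C_def .
  then show ?thesis unfolding samepat_def pref_C1[of _ x y] pref_C2[of _ y x] by simp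
qed

lemma IIA_sp: "profile \<Phi> \<Longrightarrow> dom \<Phi>' = dom \<Phi> \<Longrightarrow> \<forall>j\<in>dom \<Phi>. samepat (ip \<Phi> j) (ip \<Phi>' j) x y
  \<Longrightarrow> sp \<Phi> x y \<longleftrightarrow> sp \<Phi>' x y"
  using IIA unfolding samepat_def sp_def by blast

lemma pareto: assumes p: "profile \<Phi>" and h: "\<forall>j\<in>dom \<Phi>. sp (ip \<Phi> j) x y"
  shows "sp \<Phi> x y"
proof -
  obtain j0 where j0: "j0 \<in> dom \<Phi>" using p unfolding profile_def society_def by blast
  define e0 where "e0 = the (\<Phi> j0)"
  define \<Phi>0 where "\<Phi>0 = (\<lambda>j. if j \<in> dom \<Phi> then Some e0 else None)"
  have d0: "dom \<Phi>0 = dom \<Phi>" unfolding \<Phi>0_def dom_def by auto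
  have p0: "profile \<Phi>0" using p d0 unfolding profile_def by simp
  have ip0: "j \<in> dom \<Phi> \<Longrightarrow> ip \<Phi>0 j = [j \<mapsto> e0]" for j unfolding \<Phi>0_def by simp
  have eq: "\<forall>i\<in>dom \<Phi>0. \<forall>j\<in>dom \<Phi>0. \<Phi>0 i = \<Phi>0 j" unfolding d0 by (simp add: \<Phi>0_def)
  have u: "\<forall>i\<in>dom \<Phi>0. B (nab \<Phi>0 E) \<equiv>\<^sub>F B (nab [i \<mapsto> the (\<Phi>0 i)] E)" for E
    using U p0 eq unfolding ESF_U_def by blast
  have cc: "i \<in> dom \<Phi> \<Longrightarrow> C \<Phi>0 S = C [i \<mapsto> e0] S" for i S
    using u[of "st S"] d0 ip0 unfolding equiv_form_def C_def by auto
  have pp: "i \<in> dom \<Phi> \<Longrightarrow> pref (ip \<Phi>0 i) a b \<longleftrightarrow> pref (ip \<Phi> j0) a b" for i a b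
    unfolding pref_def using cc[of i] cc[OF j0] ip0 e0_def by simp
  have "samepat \<Phi> \<Phi>0 x y"
  proof (rule IIA[OF p d0], intro ballI)
    fix j assume j: "j \<in> dom \<Phi>"
    show "samepat (ip \<Phi> j) (ip \<Phi>0 j) x y"
      using h j j0 pp[OF j] unfolding samepat_def sp_def by blast
  qed
  moreover have "pref \<Phi>0 a b \<longleftrightarrow> pref (ip \<Phi> j0) a b" for a b
    unfolding pref_def using cc[OF j0] e0_def by simp
  ultimately show ?thesis using h j0 unfolding samepat_def sp_def by blast
qed

lemma SDs: assumes "w \<noteq> w'" "w' \<noteq> w''" "w \<noteq> w''"
  shows "\<exists>e. pref [i \<mapsto> e] w w' \<and> pref [i \<mapsto> e] w' w \<and> sp [i \<mapsto> e] w' w''"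
    and "\<exists>e. sp [i \<mapsto> e] w w' \<and> pref [i \<mapsto> e] w' w'' \<and> pref [i \<mapsto> e] w'' w'"
    and "\<exists>e. sp [i \<mapsto> e] w w' \<and> sp [i \<mapsto> e] w' w''"
proof -
  have m1: "models (B (st {w,w'})) = {w,w'}" and m2: "models (B (st {w',w''})) = {w',w''}"
    using st by auto
  have cE: "models (B (nab [i \<mapsto> e] E)) = C [i \<mapsto> e] (models (B E))" for e E
    using C_E[OF profile_single] by simp
  note x = sd[unfolded ESF_SD_def, rule_format, OF assms(1,2,3) m1 m2, of i, unfolded cE m1 m2]
  have pw1: "pref P w w' \<longleftrightarrow> w \<in> C P {w,w'}" "pref P w' w \<longleftrightarrow> w' \<in> C P {w,w'}" for P
    using pref_C1 pref_C2 by auto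
  have pw2: "pref P w' w'' \<longleftrightarrow> w' \<in> C P {w',w''}" "pref P w'' w' \<longleftrightarrow> w'' \<in> C P {w',w''}" for P
    using pref_C1 pref_C2 by auto
  obtain e2 where e2: "C [i \<mapsto> e2] {w,w'} = {w,w'}" "C [i \<mapsto> e2] {w',w''} = {w'}"
    using x[THEN conjunct2, THEN conjunct1] by blast
  obtain e3 where e3: "C [i \<mapsto> e3] {w,w'} = {w}" "C [i \<mapsto> e3] {w',w''} = {w',w''}"
    using x[THEN conjunct2, THEN conjunct2, THEN conjunct1] by blast
  obtain e4 where e4: "C [i \<mapsto> e4] {w,w'} = {w}" "C [i \<mapsto> e4] {w',w''} = {w'}"
    using x[THEN conjunct2, THEN conjunct2, THEN conjunct2] by blast
  show "\<exists>e. pref [i \<mapsto> e] w w' \<and> pref [i \<mapsto> e] w' w \<and> sp [i \<mapsto> e] w' w''"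
    apply (rule exI[of _ e2]) unfolding sp_def pw1 pw2 e2 using assms by simp
  show "\<exists>e. sp [i \<mapsto> e] w w' \<and> pref [i \<mapsto> e] w' w'' \<and> pref [i \<mapsto> e] w'' w'"
    apply (rule exI[of _ e3]) unfolding sp_def pw1 pw2 e3 using assms by simp
  show "\<exists>e. sp [i \<mapsto> e] w w' \<and> sp [i \<mapsto> e] w' w''"
    apply (rule exI[of _ e4]) unfolding sp_def pw1 pw2 e4 using assms by simp
qed

end



lemma closure_pairs:
  fixes R :: "'w \<Rightarrow> 'w \<Rightarrow> bool"
  assumes ab: "R a b" "a \<noteq> b"
    and cl: "\<And>a b c. R a b \<Longrightarrow> a \<noteq> b \<Longrightarrow> c \<noteq> a \<Longrightarrow> c \<noteq> b \<Longrightarrow> R a c \<and> R c b"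
    and third: "\<And>a b :: 'w. \<exists>c. c \<noteq> a \<and> c \<noteq> b"
    and uv: "u \<noteq> v"
  shows "R u v"
proof -
  have Rav: "R a v" if "v \<noteq> a" for v
  proof (cases "v = b")
    case True then show ?thesis using ab by simp
  next
    case False then show ?thesis using cl[OF ab, of v] that by blast
  qed
  have gen: "R u v" if "v \<noteq> a" "u \<noteq> v" for u v
  proof (cases "u = a")
    case True then show ?thesis using Rav that by simp
  next
    case False then show ?thesis using cl[OF Rav[OF that(1)], of u] that by blast
  qed
  show ?thesis
  proof (cases "v = a")
    case False then show ?thesis using gen uv by blast
  next
    case True
    obtain c where c: "c \<noteq> a" "c \<noteq> u" using third[of a u] by blast
    have "R u c" using gen[of c u] c by auto
    then show ?thesis using cl[of u c a] c uv True by blast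
  qed
qed

context arrow
begin

lemma three: "\<exists>x y z :: 'p set. x \<noteq> y \<and> y \<noteq> z \<and> x \<noteq> z"
proof -
  have "\<not> (\<forall>p q :: 'p. p = q)"
  proof
    assume "\<forall>p q :: 'p. p = q"
    then have "card (UNIV :: 'p set) \<le> 1" by (simp add: card_le_Suc0_iff_eq)
    then show False using card2 by simp
  qed
  then obtain p q :: 'p where "p \<noteq> q" by blast
  then show ?thesis by (intro exI[of _ "{}"] exI[of _ "{p}"] exI[of _ "{q}"]) auto
qed

lemma third: "\<exists>c :: 'p set. c \<noteq> a \<and> c \<noteq> b"
proof -
  obtain x y z :: "'p set" where "x \<noteq> y \<and> y \<noteq> z \<and> x \<noteq> z" using three by blast
  then show ?thesis
  proof (cases "x \<noteq> a \<and> x \<noteq> b")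
    case True then show ?thesis by blast
  next
    case F1: False
    show ?thesis
    proof (cases "y \<noteq> a \<and> y \<noteq> b")
      case True then show ?thesis by blast
    next
      case False
      have "z \<noteq> a \<and> z \<noteq> b" using F1 False \<open>x \<noteq> y \<and> y \<noteq> z \<and> x \<noteq> z\<close> by auto
      then show ?thesis by blast
    qed
  qed
qed

lemma pref_cases: "profile P \<Longrightarrow> sp P a b \<or> sp P b a \<or> (pref P a b \<and> pref P b a)"
  unfolding sp_def using pref_total by blast

context fixes N :: "'a set" assumes soc: "society N"
begin

definition mk :: "('a \<Rightarrow> 'e) \<Rightarrow> ('a \<rightharpoonup> 'e)" where
  "mk f = (\<lambda>j. if j \<in> N then Some (f j) else None)"

lemma dom_mk: "dom (mk f) = N" unfolding mk_def dom_def by auto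

lemma ip_mk: "j \<in> N \<Longrightarrow> ip (mk f) j = [j \<mapsto> f j]" unfolding mk_def by simp

lemma profN: "dom \<Phi> = N \<Longrightarrow> profile \<Phi>" using soc unfolding profile_def by simp

definition dec where
  "dec G a b \<longleftrightarrow> (\<forall>\<Phi>. dom \<Phi> = N \<longrightarrow> (\<forall>j\<in>G. sp (ip \<Phi> j) a b) \<longrightarrow> sp \<Phi> a b)"

definition ad where
  "ad G a b \<longleftrightarrow> (\<forall>\<Phi>. dom \<Phi> = N \<longrightarrow> (\<forall>j\<in>G. sp (ip \<Phi> j) a b) \<longrightarrow>
      (\<forall>j\<in>N - G. sp (ip \<Phi> j) b a) \<longrightarrow> sp \<Phi> a b)"

definition D where "D G \<longleftrightarrow> (\<forall>a b. a \<noteq> b \<longrightarrow> dec G a b)"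

lemma dec_ad: "dec G a b \<Longrightarrow> ad G a b" unfolding dec_def ad_def by blast

lemma IIA_N: "dom \<Phi> = N \<Longrightarrow> dom \<Psi> = N \<Longrightarrow> (\<And>j. j \<in> N \<Longrightarrow> samepat (ip \<Phi> j) (ip \<Psi> j) x y)
  \<Longrightarrow> sp \<Phi> x y \<longleftrightarrow> sp \<Psi> x y"
  using IIA_sp[OF profN, of \<Phi> \<Psi> x y] by simp

lemma fe1: assumes G: "G \<subseteq> N" and a: "ad G x y" and dist: "x \<noteq> y" "y \<noteq> z" "x \<noteq> z"
  shows "dec G x z"
  unfolding dec_def
proof (intro allI impI)
  fix \<Phi> :: "'a \<rightharpoonup> 'e" assume d: "dom \<Phi> = N" and hG: "\<forall>j\<in>G. sp (ip \<Phi> j) x z"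
  define PG where "PG j e \<longleftrightarrow> sp [j \<mapsto> e] x y \<and> sp [j \<mapsto> e] y z" for j e
  define PO where "PO j e \<longleftrightarrow> sp [j \<mapsto> e] y x \<and> sp [j \<mapsto> e] y z \<and> samepat [j \<mapsto> e] (ip \<Phi> j) x z" for j e
  have exG: "\<exists>e. PG j e" for j unfolding PG_def using SDs(3)[OF dist] by blast
  have exO: "\<exists>e. PO j e" if j: "j \<in> N" for j
  proof -
    have pj: "profile (ip \<Phi> j)" by (rule profile_single)
    consider "sp (ip \<Phi> j) x z" | "sp (ip \<Phi> j) z x" | "pref (ip \<Phi> j) x z \<and> pref (ip \<Phi> j) z x"
      using pref_cases[OF pj] by blast
    then show ?thesis
    proof cases
      case 1
      obtain e where e: "sp [j \<mapsto> e] y x" "sp [j \<mapsto> e] x z" using SDs(3)[of y x z j] dist by blast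
      have "sp [j \<mapsto> e] y z" using sp_trans[OF profile_single e] .
      then show ?thesis unfolding PO_def using e 1 samepat_sp by blast
    next
      case 2
      obtain e where e: "sp [j \<mapsto> e] y z" "sp [j \<mapsto> e] z x" using SDs(3)[of y z x j] dist by blast
      have "sp [j \<mapsto> e] y x" using sp_trans[OF profile_single e] .
      moreover have "samepat [j \<mapsto> e] (ip \<Phi> j) z x" using e 2 samepat_sp by blast
      ultimately show ?thesis unfolding PO_def using e samepat_sym by blast
    next
      case 3
      obtain e where e: "sp [j \<mapsto> e] y x" "pref [j \<mapsto> e] x z" "pref [j \<mapsto> e] z x"
        using SDs(2)[of y x z j] dist by blast
      have "sp [j \<mapsto> e] y z" using sp_pref_trans[OF profile_single e(1,2)] .
      moreover have "samepat [j \<mapsto> e] (ip \<Phi> j) x z" using e 3 unfolding samepat_def by blast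
      ultimately show ?thesis unfolding PO_def using e by blast
    qed
  qed
  define f where "f j = (if j \<in> G then (SOME e. PG j e) else (SOME e. PO j e))" for j
  define \<Psi> where "\<Psi> = mk f"
  have dP: "dom \<Psi> = N" unfolding \<Psi>_def by (rule dom_mk)
  have fG: "j \<in> G \<Longrightarrow> PG j (f j)" for j unfolding f_def using someI_ex[OF exG] by simp
  have fO: "j \<in> N \<Longrightarrow> j \<notin> G \<Longrightarrow> PO j (f j)" for j unfolding f_def using someI_ex[OF exO] by simp
  have ipP: "j \<in> N \<Longrightarrow> ip \<Psi> j = [j \<mapsto> f j]" for j unfolding \<Psi>_def by (rule ip_mk)
  have h1: "\<forall>j\<in>G. sp (ip \<Psi> j) x y"
  proof
    fix j assume j: "j \<in> G"
    then have "j \<in> N" using G by blast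
    then show "sp (ip \<Psi> j) x y" using fG[OF j] ipP unfolding PG_def by simp
  qed
  have h2: "\<forall>j\<in>N - G. sp (ip \<Psi> j) y x"
  proof
    fix j assume j: "j \<in> N - G"
    then show "sp (ip \<Psi> j) y x" using fO ipP unfolding PO_def by simp
  qed
  have "sp \<Psi> x y"
    using a dP h1 h2 unfolding ad_def by blast
  moreover have "sp \<Psi> y z"
  proof (rule pareto[OF profN[OF dP]], intro ballI)
    fix j assume "j \<in> dom \<Psi>"
    then have j: "j \<in> N" using dP by simp
    show "sp (ip \<Psi> j) y z"
    proof (cases "j \<in> G")
      case True then show ?thesis using fG ipP j unfolding PG_def by simp
    next
      case False then show ?thesis using fO ipP j unfolding PO_def by simp
    qed
  qed
  ultimately have sPxz: "sp \<Psi> x z" using sp_trans[OF profN[OF dP]] by blast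
  have "sp \<Phi> x z \<longleftrightarrow> sp \<Psi> x z"
  proof (rule IIA_N[OF d dP])
    fix j assume j: "j \<in> N"
    show "samepat (ip \<Phi> j) (ip \<Psi> j) x z"
    proof (cases "j \<in> G")
      case True
      have "sp [j \<mapsto> f j] x z" using fG[OF True] sp_trans[OF profile_single] unfolding PG_def by blast
      then have "sp (ip \<Psi> j) x z" using ipP[OF j] by simp
      then show ?thesis using hG True samepat_sp by blast
    next
      case False
      have "samepat [j \<mapsto> f j] (ip \<Phi> j) x z" using fO[OF j False] unfolding PO_def by simp
      then show ?thesis using ipP[OF j] unfolding samepat_def by simp
    qed
  qed
  then show "sp \<Phi> x z" using sPxz by simp
qed

lemma fe2: assumes G: "G \<subseteq> N" and a: "ad G x y" and dist: "x \<noteq> y" "y \<noteq> z" "x \<noteq> z"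
  shows "dec G z y"
  unfolding dec_def
proof (intro allI impI)
  fix \<Phi> :: "'a \<rightharpoonup> 'e" assume d: "dom \<Phi> = N" and hG: "\<forall>j\<in>G. sp (ip \<Phi> j) z y"
  define PG where "PG j e \<longleftrightarrow> sp [j \<mapsto> e] z x \<and> sp [j \<mapsto> e] x y" for j e
  define PO where "PO j e \<longleftrightarrow> sp [j \<mapsto> e] y x \<and> sp [j \<mapsto> e] z x \<and> samepat [j \<mapsto> e] (ip \<Phi> j) z y" for j e
  have exG: "\<exists>e. PG j e" for j unfolding PG_def using SDs(3)[of z x y j] dist by blast
  have exO: "\<exists>e. PO j e" if j: "j \<in> N" for j
  proof -
    have pj: "profile (ip \<Phi> j)" by (rule profile_single)
    consider "sp (ip \<Phi> j) z y" | "sp (ip \<Phi> j) y z" | "pref (ip \<Phi> j) z y \<and> pref (ip \<Phi> j) y z"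
      using pref_cases[OF pj] by blast
    then show ?thesis
    proof cases
      case 1
      obtain e where e: "sp [j \<mapsto> e] z y" "sp [j \<mapsto> e] y x" using SDs(3)[of z y x j] dist by blast
      have "sp [j \<mapsto> e] z x" using sp_trans[OF profile_single e] .
      then show ?thesis unfolding PO_def using e 1 samepat_sp by blast
    next
      case 2
      obtain e where e: "sp [j \<mapsto> e] y z" "sp [j \<mapsto> e] z x" using SDs(3)[of y z x j] dist by blast
      have "sp [j \<mapsto> e] y x" using sp_trans[OF profile_single e] .
      moreover have "samepat [j \<mapsto> e] (ip \<Phi> j) y z" using e 2 samepat_sp by blast
      ultimately show ?thesis unfolding PO_def using e samepat_sym by blast
    next
      case 3
      obtain e where e: "pref [j \<mapsto> e] z y" "pref [j \<mapsto> e] y z" "sp [j \<mapsto> e] y x"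
        using SDs(1)[of z y x j] dist by blast
      have "sp [j \<mapsto> e] z x" using pref_sp_trans[OF profile_single e(1,3)] .
      moreover have "samepat [j \<mapsto> e] (ip \<Phi> j) z y" using e 3 unfolding samepat_def by blast
      ultimately show ?thesis unfolding PO_def using e by blast
    qed
  qed
  define f where "f j = (if j \<in> G then (SOME e. PG j e) else (SOME e. PO j e))" for j
  define \<Psi> where "\<Psi> = mk f"
  have dP: "dom \<Psi> = N" unfolding \<Psi>_def by (rule dom_mk)
  have fG: "j \<in> G \<Longrightarrow> PG j (f j)" for j unfolding f_def using someI_ex[OF exG] by simp
  have fO: "j \<in> N \<Longrightarrow> j \<notin> G \<Longrightarrow> PO j (f j)" for j unfolding f_def using someI_ex[OF exO] by simp
  have ipP: "j \<in> N \<Longrightarrow> ip \<Psi> j = [j \<mapsto> f j]" for j unfolding \<Psi>_def by (rule ip_mk)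
  have h1: "\<forall>j\<in>G. sp (ip \<Psi> j) x y"
  proof
    fix j assume j: "j \<in> G"
    then have "j \<in> N" using G by blast
    then show "sp (ip \<Psi> j) x y" using fG[OF j] ipP unfolding PG_def by simp
  qed
  have h2: "\<forall>j\<in>N - G. sp (ip \<Psi> j) y x"
  proof
    fix j assume j: "j \<in> N - G"
    then show "sp (ip \<Psi> j) y x" using fO ipP unfolding PO_def by simp
  qed
  have sxy: "sp \<Psi> x y"
    using a dP h1 h2 unfolding ad_def by blast
  have szx: "sp \<Psi> z x"
  proof (rule pareto[OF profN[OF dP]], intro ballI)
    fix j assume "j \<in> dom \<Psi>"
    then have j: "j \<in> N" using dP by simp
    show "sp (ip \<Psi> j) z x"
    proof (cases "j \<in> G")
      case True then show ?thesis using fG ipP j unfolding PG_def by simp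
    next
      case False then show ?thesis using fO ipP j unfolding PO_def by simp
    qed
  qed
  have sPzy: "sp \<Psi> z y" using sp_trans[OF profN[OF dP] szx sxy] .
  have "sp \<Phi> z y \<longleftrightarrow> sp \<Psi> z y"
  proof (rule IIA_N[OF d dP])
    fix j assume j: "j \<in> N"
    show "samepat (ip \<Phi> j) (ip \<Psi> j) z y"
    proof (cases "j \<in> G")
      case True
      have "sp [j \<mapsto> f j] z y" using fG[OF True] sp_trans[OF profile_single] unfolding PG_def by blast
      then have "sp (ip \<Psi> j) z y" using ipP[OF j] by simp
      then show ?thesis using hG True samepat_sp by blast
    next
      case False
      have "samepat [j \<mapsto> f j] (ip \<Phi> j) z y" using fO[OF j False] unfolding PO_def by simp
      then show ?thesis using ipP[OF j] unfolding samepat_def by simp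
    qed
  qed
  then show "sp \<Phi> z y" using sPzy by simp
qed

lemma ad_D: assumes G: "G \<subseteq> N" and a: "ad G x y" and xy: "x \<noteq> y"
  shows "D G"
proof -
  obtain c where c: "c \<noteq> x" "c \<noteq> y" using third[of x y] by blast
  have dxc: "dec G x c" using fe1[OF G a xy c(2)[symmetric] c(1)[symmetric]] .
  have cl: "dec G a' c' \<and> dec G c' b'" if "dec G a' b'" "a' \<noteq> b'" "c' \<noteq> a'" "c' \<noteq> b'" for a' b' c'
  proof
    show "dec G a' c'" using fe1[OF G dec_ad[OF that(1)] that(2) that(4)[symmetric] that(3)[symmetric]] .
    show "dec G c' b'" using fe2[OF G dec_ad[OF that(1)] that(2) that(4)[symmetric] that(3)[symmetric]] .
  qed
  show ?thesis unfolding D_def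
  proof (intro allI impI)
    fix u v :: "'p set" assume uv: "u \<noteq> v"
    show "dec G u v"
      by (rule closure_pairs[of "dec G" x c, OF dxc c(1)[symmetric] cl third uv])
  qed
qed

lemma not_D_empty: "\<not> D {}"
proof
  assume D0: "D {}"
  obtain x y :: "'p set" where xy: "x \<noteq> y" using three by blast
  define \<Psi> where "\<Psi> = mk (\<lambda>_. undefined)"
  have dP: "dom \<Psi> = N" unfolding \<Psi>_def by (rule dom_mk)
  have d1: "dec {} x y" using D0 xy unfolding D_def by blast
  have d2: "dec {} y x" using D0 xy unfolding D_def by blast
  have "sp \<Psi> x y" using d1[unfolded dec_def, rule_format, OF dP] by simp
  moreover have "sp \<Psi> y x" using d2[unfolded dec_def, rule_format, OF dP] by simp
  ultimately show False unfolding sp_def by blast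
qed

lemma D_N: "D N"
  unfolding D_def dec_def
proof (intro allI impI)
  fix a b and \<Phi> :: "'a \<rightharpoonup> 'e" assume "dom \<Phi> = N" "\<forall>j\<in>N. sp (ip \<Phi> j) a b"
  then show "sp \<Phi> a b" using pareto[OF profN] by simp
qed

lemma contract: assumes G: "G \<subseteq> N" and DG: "D G" and u: "G1 \<union> G2 = G" and dj: "G1 \<inter> G2 = {}"
  shows "D G1 \<or> D G2"
proof -
  obtain x y z :: "'p set" where dist: "x \<noteq> y" "y \<noteq> z" "x \<noteq> z" using three by blast
  define P1 where "P1 j e \<longleftrightarrow> sp [j \<mapsto> e] x y \<and> sp [j \<mapsto> e] y z" for j e
  define P2 where "P2 j e \<longleftrightarrow> sp [j \<mapsto> e] z x \<and> sp [j \<mapsto> e] x y" for j e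
  define P3 where "P3 j e \<longleftrightarrow> sp [j \<mapsto> e] y z \<and> sp [j \<mapsto> e] z x" for j e
  have ex1: "\<exists>e. P1 j e" for j unfolding P1_def using SDs(3)[of x y z j] dist by blast
  have ex2: "\<exists>e. P2 j e" for j unfolding P2_def using SDs(3)[of z x y j] dist by blast
  have ex3: "\<exists>e. P3 j e" for j unfolding P3_def using SDs(3)[of y z x j] dist by blast
  define f where "f j = (if j \<in> G1 then (SOME e. P1 j e) else if j \<in> G2 then (SOME e. P2 j e)
     else (SOME e. P3 j e))" for j
  define \<Psi> where "\<Psi> = mk f"
  have dP: "dom \<Psi> = N" unfolding \<Psi>_def by (rule dom_mk)
  have pP: "profile \<Psi>" using profN[OF dP] .
  have ipP: "j \<in> N \<Longrightarrow> ip \<Psi> j = [j \<mapsto> f j]" for j unfolding \<Psi>_def by (rule ip_mk)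
  have f1: "j \<in> G1 \<Longrightarrow> P1 j (f j)" for j unfolding f_def using someI_ex[OF ex1] by simp
  have f2: "j \<in> G2 \<Longrightarrow> P2 j (f j)" for j unfolding f_def using someI_ex[OF ex2] dj by auto
  have f3: "j \<notin> G1 \<Longrightarrow> j \<notin> G2 \<Longrightarrow> P3 j (f j)" for j unfolding f_def using someI_ex[OF ex3] by simp
  have G1N: "G1 \<subseteq> N" and G2N: "G2 \<subseteq> N" using G u by auto
  have sxy: "sp \<Psi> x y"
  proof -
    have "\<forall>j\<in>G. sp (ip \<Psi> j) x y"
    proof
      fix j assume j: "j \<in> G"
      then have jN: "j \<in> N" using G by blast
      have "sp [j \<mapsto> f j] x y" using j u f1 f2 unfolding P1_def P2_def by blast
      then show "sp (ip \<Psi> j) x y" using ipP[OF jN] by simp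
    qed
    then show ?thesis using DG dist dP unfolding D_def dec_def by blast
  qed
  show ?thesis
  proof (cases "sp \<Psi> x z")
    case True
    have "ad G1 x z" unfolding ad_def
    proof (intro allI impI)
      fix \<Phi> :: "'a \<rightharpoonup> 'e" assume d: "dom \<Phi> = N" and h1: "\<forall>j\<in>G1. sp (ip \<Phi> j) x z"
        and h2: "\<forall>j\<in>N - G1. sp (ip \<Phi> j) z x"
      have "sp \<Phi> x z \<longleftrightarrow> sp \<Psi> x z"
      proof (rule IIA_N[OF d dP])
        fix j assume j: "j \<in> N"
        show "samepat (ip \<Phi> j) (ip \<Psi> j) x z"
        proof (cases "j \<in> G1")
          case True
          have "sp [j \<mapsto> f j] x z" using f1[OF True] sp_trans[OF profile_single] unfolding P1_def by blast
          then have "sp (ip \<Psi> j) x z" using ipP[OF j] by simp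
          then show ?thesis using h1 True samepat_sp by blast
        next
          case False
          have "sp [j \<mapsto> f j] z x"
          proof (cases "j \<in> G2")
            case True then show ?thesis using f2 unfolding P2_def by blast
          next
            case F2: False then show ?thesis using f3 False unfolding P3_def by blast
          qed
          then have "sp (ip \<Psi> j) z x" using ipP[OF j] by simp
          moreover have "sp (ip \<Phi> j) z x" using h2 j False by blast
          ultimately show ?thesis using samepat_sp samepat_sym by blast
        qed
      qed
      then show "sp \<Phi> x z" using True by simp
    qed
    then have "D G1" using ad_D[OF G1N] dist by blast
    then show ?thesis by blast
  next
    case False
    then have "pref \<Psi> z x" using pref_total[OF pP] unfolding sp_def by blast
    then have szy: "sp \<Psi> z y" using pref_sp_trans[OF pP _ sxy] by blast
    have "ad G2 z y" unfolding ad_def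
    proof (intro allI impI)
      fix \<Phi> :: "'a \<rightharpoonup> 'e" assume d: "dom \<Phi> = N" and h1: "\<forall>j\<in>G2. sp (ip \<Phi> j) z y"
        and h2: "\<forall>j\<in>N - G2. sp (ip \<Phi> j) y z"
      have "sp \<Phi> z y \<longleftrightarrow> sp \<Psi> z y"
      proof (rule IIA_N[OF d dP])
        fix j assume j: "j \<in> N"
        show "samepat (ip \<Phi> j) (ip \<Psi> j) z y"
        proof (cases "j \<in> G2")
          case True
          have "sp [j \<mapsto> f j] z y" using f2[OF True] sp_trans[OF profile_single] unfolding P2_def by blast
          then have "sp (ip \<Psi> j) z y" using ipP[OF j] by simp
          then show ?thesis using h1 True samepat_sp by blast
        next
          case False
          have "sp [j \<mapsto> f j] y z"
          proof (cases "j \<in> G1")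
            case True then show ?thesis using f1 unfolding P1_def by blast
          next
            case F1: False then show ?thesis using f3 False unfolding P3_def by blast
          qed
          then have "sp (ip \<Psi> j) y z" using ipP[OF j] by simp
          moreover have "sp (ip \<Phi> j) y z" using h2 j False by blast
          ultimately show ?thesis using samepat_sp samepat_sym by blast
        qed
      qed
      then show "sp \<Phi> z y" using szy by simp
    qed
    then have "D G2" using ad_D[OF G2N] dist by blast
    then show ?thesis by blast
  qed
qed

lemma dictator_ex: "finite G \<Longrightarrow> G \<subseteq> N \<Longrightarrow> D G \<Longrightarrow> \<exists>d\<in>G. D {d}"
proof (induction "card G" arbitrary: G rule: less_induct)
  case less
  have "G \<noteq> {}" using less.prems(3) not_D_empty by blast
  then obtain d where d: "d \<in> G" by blast
  have "D {d} \<or> D (G - {d})"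
    using contract[OF less.prems(2,3), of "{d}" "G - {d}"] d by blast
  then show ?case
  proof
    assume "D {d}" then show ?thesis using d by blast
  next
    assume "D (G - {d})"
    moreover have "card (G - {d}) < card G" by (rule card_Diff1_less[OF less.prems(1) d])
    ultimately have "\<exists>d'\<in>G - {d}. D {d'}"
      using less.hyps[of "G - {d}"] less.prems by blast
    then show ?thesis by blast
  qed
qed

lemma dictator_final: "\<exists>d\<in>N. \<forall>\<Phi> E. dom \<Phi> = N \<longrightarrow>
        B (nab \<Phi> E) \<turnstile> B (nab [d \<mapsto> the (\<Phi> d)] E)"
proof -
  have fN: "finite N" using soc unfolding society_def by blast
  obtain d where d: "d \<in> N" and Dd: "D {d}" using dictator_ex[OF fN _ D_N] by blast
  have "\<forall>\<Phi> E. dom \<Phi> = N \<longrightarrow> B (nab \<Phi> E) \<turnstile> B (nab [d \<mapsto> the (\<Phi> d)] E)"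
  proof (intro allI impI)
    fix \<Phi> :: "'a \<rightharpoonup> 'e" and E assume dN: "dom \<Phi> = N"
    have p: "profile \<Phi>" using profN[OF dN] .
    define Pd where "Pd = ip \<Phi> d"
    have pd: "profile Pd" unfolding Pd_def by (rule profile_single)
    define S where "S = models (B E)"
    have S: "S \<noteq> {}" using B_ne S_def by simp
    have m1: "models (B (nab \<Phi> E)) = C \<Phi> S" using C_E[OF p] S_def by simp
    have m2: "models (B (nab Pd E)) = C Pd S" using C_E[OF pd] S_def by simp
    have "C \<Phi> S \<subseteq> C Pd S"
    proof
      fix v assume v: "v \<in> C \<Phi> S"
      show "v \<in> C Pd S"
      proof (rule ccontr)
        assume nv: "v \<notin> C Pd S"
        obtain u where u: "u \<in> C Pd S" using C_ne by blast
        have uS: "u \<in> S" using u C_sub[OF pd S] by blast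
        have vS: "v \<in> S" using v C_sub[OF p S] by blast
        have uv: "u \<noteq> v" using u nv by blast
        have cd: "C Pd {u,v} = C Pd S \<inter> {u,v}"
          using C_choice[OF pd _ _, of "{u,v}" S] u uS vS by blast
        have "sp Pd u v" unfolding sp_def pref_C1[of _ u v] pref_C2[of _ v u] cd using u nv uv by auto
        then have "sp \<Phi> u v" using Dd uv dN unfolding D_def dec_def Pd_def by blast
        moreover have cp: "C \<Phi> {u,v} = C \<Phi> S \<inter> {u,v}"
          using C_choice[OF p _ _, of "{u,v}" S] v uS vS by blast
        ultimately show False unfolding sp_def pref_C2[of _ v u] cp using v by simp
      qed
    qed
    then show "B (nab \<Phi> E) \<turnstile> B (nab [d \<mapsto> the (\<Phi> d)] E)"
      unfolding entails_def using m1 m2 Pd_def by simp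
  qed
  then show ?thesis using d by blast
qed

end
end


theorem corollary2:
  fixes B :: "'e \<Rightarrow> 'p::finite form"
    and nab :: "('a::wellorder \<rightharpoonup> 'e) \<Rightarrow> 'e \<Rightarrow> 'e"
  assumes "epistemic_space B"
    and "card (UNIV :: 'p set) \<ge> 2"
    and "ES_basic_fusion B nab"
    and "ESF_SD B nab"
    and "ESF_U B nab"
    and "ESF_I B nab"
  shows "ESF_D B nab"
proof -
  interpret arrow B nab using assms by unfold_locales
  show ?thesis unfolding ESF_D_def using dictator_final by blast
qed

end
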